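(* Let $d\ge 1$, $e=2^d$, and let $a=a_1\cdots a_{d+e}\in\{0,1\}^{d+e}$ satisfy $\overline{a_1\cdots a_d}=a_{e+1}\cdots a_{e+d}$ (bitwise complement). Let $k$ be the number of indices $z\in\{d,\dots,e\}$ with $a_z=0$. Write $\lambda_d$ as the concatenation of the $2^e$ blocks $M_dw_0,\dots,M_dw_{2^e-1}$, each of length $e$. Then the number of pairs $(n,z)$ with $n$ even, $0\le n\le 2^e-2$, $d\le z\le e$, such that $a$ occurs in $\lambda_d$ starting at position $e-z+1$ of the block $M_dw_n$ (so that $a_1\cdots a_z$ is the suffix of length $z$ of $M_dw_n$ and $a_{z+1}\cdots a_{d+e}$ is the prefix of length $d+e-z$ of $M_dw_{n+1}$) is exactly $k$.
   Context: Over $\mathbb{F}_2$, $M_0=(1)$ and $M_{d+1}=\begin{pmatrix} M_d & M_d\\ 0 & M_d\end{pmatrix}$, so $M_d$ is $e\times e$ with $e=2^d$. $w_0,\dots,w_{2^e-1}$ are all vectors of $\mathbb{F}_2^e$ in increasing lexicographic order ($w_n$ is the $e$-bit binary representation of $n$, most significant bit first). Binary words and vectors are identified. $\lambda_d=(M_dw_0)(M_dw_1)\cdots(M_dw_{2^e-1})$. For a binary word $u$, $\overline{u}$ denotes its bitwise complement. *)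

theory Defs
  imports Main
begin

text \<open>Bits of F_2 are represented as bool (True = 1). Indices are 0-based.\<close>

text \<open>The matrix M_d, as an entry function on indices i, j < 2^d:
  M_0 = (1), M_{d+1} = [[M_d, M_d], [0, M_d]].\<close>
fun Mmat :: "nat \<Rightarrow> nat \<Rightarrow> nat \<Rightarrow> bool" where
  "Mmat 0 i j = True"
| "Mmat (Suc d) i j =
     (let e = 2 ^ d in
      if i < e then (if j < e then Mmat d i j else Mmat d i (j - e))
      else (if j < e then False else Mmat d (i - e) (j - e)))"

text \<open>w_n: the e-bit binary representation of n, most significant bit first.\<close>
definition wvec :: "nat \<Rightarrow> nat \<Rightarrow> nat \<Rightarrow> bool" where
  "wvec e n j = odd (n div 2 ^ (e - 1 - j))"

definition block :: "nat \<Rightarrow> nat \<Rightarrow> bool list" where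
  "block d n = map (\<lambda>i. odd (card {j. j < 2 ^ d \<and> Mmat d i j \<and> wvec (2 ^ d) n j})) [0..<2 ^ d]"

definition lam :: "nat \<Rightarrow> bool list" where
  "lam d = concat (map (block d) [0..<2 ^ (2 ^ d)])"

end

theory Submission
  imports Defs
begin

fun par :: "nat \<Rightarrow> (nat \<Rightarrow> bool) \<Rightarrow> bool" where
  "par 0 P = False"
| "par (Suc n) P = (par n P \<noteq> P n)"

lemma par_card: "odd (card {j. j < n \<and> P j}) = par n P"
proof (induction n)
  case 0 then show ?case by simp
next
  case (Suc n)
  show ?case
  proof (cases "P n")
    case True
    have "{j. j < Suc n \<and> P j} = insert n {j. j < n \<and> P j}" using True by auto
    then show ?thesis using Suc True by simp
  next
    case False
    have "{j. j < Suc n \<and> P j} = {j. j < n \<and> P j}" using False less_Suc_eq by auto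
    then show ?thesis using Suc False by simp
  qed
qed

lemma par_add: "par (a + b) P = (par a P \<noteq> par b (\<lambda>j. P (j + a)))"
  by (induction b) (auto simp: add.commute)

lemma par_xor: "par n (\<lambda>j. P j \<noteq> Q j) = (par n P \<noteq> par n Q)"
  by (induction n) auto

lemma par_cong: "(\<And>j. j < n \<Longrightarrow> P j = Q j) \<Longrightarrow> par n P = par n Q"
  by (induction n) auto

lemma par_false: "par n (\<lambda>j. False) = False"
  by (induction n) auto

lemma par_single1: "par n (\<lambda>j. j = k) = (k < n)"
  by (induction n) auto

lemma par_single: "par n (\<lambda>j. j = k \<and> P j) = (k < n \<and> P k)"
  by (induction n) auto

definition Mv :: "nat \<Rightarrow> (nat \<Rightarrow> bool) \<Rightarrow> nat \<Rightarrow> bool" where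
  "Mv d f i = par (2 ^ d) (\<lambda>j. Mmat d i j \<and> f j)"

lemma Mv_cong: "(\<And>j. j < 2 ^ d \<Longrightarrow> f j = g j) \<Longrightarrow> Mv d f i = Mv d g i"
  unfolding Mv_def by (rule par_cong) auto

lemma Mv_xor: "Mv d (\<lambda>j. f j \<noteq> g j) i = (Mv d f i \<noteq> Mv d g i)"
proof -
  have "Mv d (\<lambda>j. f j \<noteq> g j) i = par (2 ^ d) (\<lambda>j. (Mmat d i j \<and> f j) \<noteq> (Mmat d i j \<and> g j))"
    unfolding Mv_def by (rule par_cong) auto
  also have "\<dots> = (Mv d f i \<noteq> Mv d g i)" unfolding Mv_def by (rule par_xor)
  finally show ?thesis .
qed

lemma M1: "i < 2 ^ d \<Longrightarrow> j < 2 ^ d \<Longrightarrow> Mmat (Suc d) i j = Mmat d i j"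
  by (simp add: Let_def)
lemma M2: "i < 2 ^ d \<Longrightarrow> Mmat (Suc d) i (j + 2 ^ d) = Mmat d i j"
  by (simp add: Let_def)
lemma M3: "\<not> i < 2 ^ d \<Longrightarrow> j < 2 ^ d \<Longrightarrow> \<not> Mmat (Suc d) i j"
  by (simp add: Let_def)
lemma M4: "\<not> i < 2 ^ d \<Longrightarrow> Mmat (Suc d) i (j + 2 ^ d) = Mmat d (i - 2 ^ d) j"
  by (simp add: Let_def)

lemma Mv_Suc:
  "Mv (Suc d) f i = (if i < 2 ^ d then Mv d f i \<noteq> Mv d (\<lambda>j. f (j + 2 ^ d)) i
                     else Mv d (\<lambda>j. f (j + 2 ^ d)) (i - 2 ^ d))"
proof -
  have "Mv (Suc d) f i = (par (2 ^ d) (\<lambda>j. Mmat (Suc d) i j \<and> f j) \<noteq>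
        par (2 ^ d) (\<lambda>j. Mmat (Suc d) i (j + 2 ^ d) \<and> f (j + 2 ^ d)))"
    unfolding Mv_def using par_add[of "2^d" "2^d"] by (simp add: mult_2)
  show ?thesis
  proof (cases "i < 2 ^ d")
    case True
    have "par (2 ^ d) (\<lambda>j. Mmat (Suc d) i j \<and> f j) = Mv d f i"
      unfolding Mv_def by (rule par_cong) (simp only: M1[OF True])
    moreover have "par (2 ^ d) (\<lambda>j. Mmat (Suc d) i (j + 2 ^ d) \<and> f (j + 2 ^ d)) = Mv d (\<lambda>j. f (j + 2 ^ d)) i"
      unfolding Mv_def by (rule par_cong) (simp only: M2[OF True])
    ultimately show ?thesis using True \<open>Mv (Suc d) f i = _\<close> by simp
  next
    case False
    have "par (2 ^ d) (\<lambda>j. Mmat (Suc d) i j \<and> f j) = par (2 ^ d) (\<lambda>j. False)"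
      by (rule par_cong) (use M3[OF False] in blast)
    moreover have "par (2 ^ d) (\<lambda>j. Mmat (Suc d) i (j + 2 ^ d) \<and> f (j + 2 ^ d)) = Mv d (\<lambda>j. f (j + 2 ^ d)) (i - 2 ^ d)"
      unfolding Mv_def by (rule par_cong) (simp only: M4[OF False])
    ultimately show ?thesis using False \<open>Mv (Suc d) f i = _\<close> by (simp add: par_false)
  qed
qed

lemma Mv_inv: "i < 2 ^ d \<Longrightarrow> Mv d (Mv d f) i = f i"
proof (induction d arbitrary: f i)
  case 0
  then show ?case by (simp add: Mv_def)
next
  case (Suc d)
  define E :: nat where "E = 2 ^ d"
  define f2 where "f2 = (\<lambda>j. f (j + E))"
  have g2: "(\<lambda>j. Mv (Suc d) f (j + E)) = Mv d f2"
    by (rule ext) (simp add: Mv_Suc E_def f2_def)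
  show ?case
  proof (cases "i < E")
    case True
    have "Mv d (Mv (Suc d) f) i = Mv d (\<lambda>j. Mv d f j \<noteq> Mv d f2 j) i"
      by (rule Mv_cong) (simp add: Mv_Suc E_def f2_def)
    also have "\<dots> = (f i \<noteq> f2 i)" using Mv_xor[of d "Mv d f" "Mv d f2" i] Suc.IH[of i f] Suc.IH[of i f2] True E_def by simp
    finally have B: "Mv d (Mv (Suc d) f) i = (f i \<noteq> f2 i)" .
    have T: "(i < 2 ^ d) = True" using True E_def by simp
    have A: "Mv (Suc d) (Mv (Suc d) f) i = (Mv d (Mv (Suc d) f) i \<noteq> Mv d (\<lambda>j. Mv (Suc d) f (j + E)) i)"
      unfolding E_def by (simp only: Mv_Suc[of d "Mv (Suc d) f" i] T if_True)
    show ?thesis using A B g2 Suc.IH[of i f2] True E_def by (auto simp: f2_def)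
  next
    case False
    then show ?thesis using Suc.IH[of "i - E" f2] Suc.prems g2 E_def f2_def
      by (simp add: Mv_Suc)
  qed
qed

lemma Mlastcol: "i < 2 ^ d \<Longrightarrow> Mmat d i (2 ^ d - 1)"
proof (induction d arbitrary: i)
  case 0 then show ?case by simp
next
  case (Suc d)
  have h: "(2::nat) ^ d \<ge> 1" by simp
  have h1: "\<not> (2 ^ Suc d - 1 < (2::nat) ^ d)" "2 ^ Suc d - 1 - 2 ^ d = (2::nat) ^ d - 1"
    using h by auto
  show ?case
  proof (cases "i < 2 ^ d")
    case True
    then show ?thesis using Suc.IH[of i] h1 by (simp only: Mmat.simps Let_def if_True if_False)
  next
    case False
    then show ?thesis using Suc.IH[of "i - 2^d"] Suc.prems h1
      by (simp only: Mmat.simps Let_def if_True if_False) simp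
  qed
qed

lemma Mlastrow: "j < 2 ^ d \<Longrightarrow> Mmat d (2 ^ d - 1) j = (j = 2 ^ d - 1)"
proof (induction d arbitrary: j)
  case 0 then show ?case by simp
next
  case (Suc d)
  have h: "(2::nat) ^ d \<ge> 1" by simp
  have h1: "\<not> (2 ^ Suc d - 1 < (2::nat) ^ d)" "2 ^ Suc d - 1 - 2 ^ d = (2::nat) ^ d - 1"
    using h by auto
  show ?case
  proof (cases "j < 2 ^ d")
    case True
    then show ?thesis using h h1 by (simp only: Mmat.simps Let_def if_True if_False) simp
  next
    case False
    then have "Mmat d (2 ^ d - 1) (j - 2^d) = (j - 2^d = 2 ^ d - 1)"
      using Suc.IH[of "j - 2^d"] Suc.prems by simp
    then show ?thesis using False h h1 Suc.prems
      by (simp only: Mmat.simps Let_def if_True if_False) auto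
  qed
qed

lemma Mv_last: "Mv d f (2 ^ d - 1) = f (2 ^ d - 1)"
proof -
  have "Mv d f (2 ^ d - 1) = par (2 ^ d) (\<lambda>j. j = 2 ^ d - 1 \<and> f j)"
    unfolding Mv_def by (rule par_cong) (metis Mlastrow)
  then show ?thesis by (simp add: par_single)
qed

lemma Mv_unit: "i < 2 ^ d \<Longrightarrow> Mv d (\<lambda>j. j = 2 ^ d - 1) i"
proof -
  assume i: "i < 2 ^ d"
  have "Mv d (\<lambda>j. j = 2 ^ d - 1) i = par (2 ^ d) (\<lambda>j. j = 2 ^ d - 1 \<and> True)"
    unfolding Mv_def by (rule par_cong) (metis Mlastcol i)
  then show ?thesis by (simp add: par_single1)
qed

lemma block_len: "length (block d n) = 2 ^ d"
  by (simp add: block_def)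

lemma block_nth: "i < 2 ^ d \<Longrightarrow> block d n ! i = Mv d (wvec (2 ^ d) n) i"
  by (simp add: block_def Mv_def par_card conj_assoc)

lemma wvec_bit: "j < e \<Longrightarrow> wvec e n j = bit n (e - 1 - j)"
  by (simp add: wvec_def bit_iff_odd)

lemma bit_even_Suc: "even (n::nat) \<Longrightarrow> k \<ge> 1 \<Longrightarrow> bit (n + 1) k = bit n k"
proof -
  assume n: "even n" and k: "k \<ge> 1"
  obtain k' where k': "k = Suc k'" using k by (cases k) auto
  have "(n + 1) div 2 = n div 2" using n by auto
  then show ?thesis using k' by (simp add: bit_Suc)
qed

lemma wvec_Suc: "even (n::nat) \<Longrightarrow> j < e \<Longrightarrow> wvec e (n + 1) j = (wvec e n j \<noteq> (j = e - 1))"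
proof -
  assume n: "even n" and j: "j < e"
  show ?thesis
  proof (cases "j = e - 1")
    case True then show ?thesis using n j by (simp add: wvec_def)
  next
    case False
    then have "e - 1 - j \<ge> 1" using j by auto
    then show ?thesis using bit_even_Suc[OF n \<open>e - 1 - j \<ge> 1\<close>] False n j by (simp add: wvec_bit)
  qed
qed

lemma block_Suc: "even n \<Longrightarrow> block d (n + 1) = map Not (block d n)"
proof (rule nth_equalityI)
  assume n: "even n"
  show "length (block d (n + 1)) = length (map Not (block d n))" by (simp add: block_len)
  fix i assume "i < length (block d (n + 1))"
  then have i: "i < 2 ^ d" by (simp add: block_len)
  have "Mv d (wvec (2 ^ d) (n + 1)) i = Mv d (\<lambda>j. wvec (2 ^ d) n j \<noteq> (j = 2 ^ d - 1)) i"
    by (rule Mv_cong) (rule wvec_Suc[OF n])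
  also have "\<dots> = (Mv d (wvec (2 ^ d) n) i \<noteq> Mv d (\<lambda>j. j = 2 ^ d - 1) i)" by (rule Mv_xor)
  finally show "block d (n + 1) ! i = map Not (block d n) ! i"
    using i Mv_unit[OF i] by (auto simp: block_nth block_len)
qed

lemma bits_exist: "\<exists>n::nat < 2 ^ e. \<forall>k < e. bit n k = h k"
proof (induction e arbitrary: h)
  case 0 then show ?case by simp
next
  case (Suc e)
  obtain m :: nat where m: "m < 2 ^ e" "\<forall>k < e. bit m k = h (Suc k)"
    using Suc.IH[of "\<lambda>k. h (Suc k)"] by blast
  define n where "n = of_bool (h 0) + 2 * m"
  have "n < 2 ^ Suc e" using m(1) by (simp add: n_def)
  moreover have "\<forall>k < Suc e. bit n k = h k"
  proof (intro allI impI)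
    fix k assume k: "k < Suc e"
    show "bit n k = h k"
    proof (cases k)
      case 0 then show ?thesis by (simp add: n_def bit_0)
    next
      case (Suc k')
      have "n div 2 = m" by (simp add: n_def)
      then show ?thesis using Suc k m(2) by (simp add: bit_Suc)
    qed
  qed
  ultimately show ?case by blast
qed

lemma bits_unique: "n < 2 ^ e \<Longrightarrow> m < 2 ^ e \<Longrightarrow> (\<forall>k < e. bit n k = bit m k) \<Longrightarrow> n = (m::nat)"
proof -
  assume n: "n < 2 ^ e" and m: "m < 2 ^ e" and b: "\<forall>k < e. bit n k = bit m k"
  have "take_bit e n = n" "take_bit e m = m" using n m by (simp_all add: take_bit_nat_eq_self_iff)
  then have "bit n k = bit m k" for k
    by (metis b bit_take_bit_iff)
  then show ?thesis by (simp add: bit_eq_iff)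
qed

lemma block_inj:
  assumes "n < 2 ^ 2 ^ d" "m < 2 ^ 2 ^ d" "block d n = block d m"
  shows "n = m"
proof -
  let ?e = "2 ^ d :: nat"
  have w: "wvec ?e n j = wvec ?e m j" if j: "j < ?e" for j
  proof -
    have "Mv d (Mv d (wvec ?e n)) j = Mv d (Mv d (wvec ?e m)) j"
      by (rule Mv_cong) (use block_nth[of _ d n] block_nth[of _ d m] assms(3) in simp)
    then show ?thesis using j by (simp add: Mv_inv)
  qed
  have "\<forall>k < ?e. bit n k = bit m k"
  proof (intro allI impI)
    fix k assume k: "k < ?e"
    have "?e - 1 - k < ?e" using k by auto
    then have "wvec ?e n (?e - 1 - k) = wvec ?e m (?e - 1 - k)" by (rule w)
    moreover have "?e - 1 - (?e - 1 - k) = k" using k by auto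
    ultimately show "bit n k = bit m k" using k by (simp add: wvec_bit)
  qed
  then show ?thesis by (rule bits_unique[OF assms(1) assms(2)])
qed

lemma block_surj:
  assumes "length x = 2 ^ d" "\<not> x ! (2 ^ d - 1)"
  shows "\<exists>n < 2 ^ 2 ^ d. even n \<and> block d n = x"
proof -
  let ?e = "2 ^ d :: nat"
  define g where "g = Mv d (\<lambda>i. x ! i)"
  obtain n :: nat where n: "n < 2 ^ ?e" "\<forall>k < ?e. bit n k = g (?e - 1 - k)"
    using bits_exist[of ?e "\<lambda>k. g (?e - 1 - k)"] by blast
  have w: "wvec ?e n j = g j" if j: "j < ?e" for j
  proof -
    have "?e - 1 - j < ?e" "?e - 1 - (?e - 1 - j) = j" using j by auto
    then show ?thesis using n(2) j by (simp add: wvec_bit)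
  qed
  have b: "block d n = x"
  proof (rule nth_equalityI)
    show "length (block d n) = length x" using assms by (simp add: block_len)
    fix i assume "i < length (block d n)"
    then have i: "i < ?e" by (simp add: block_len)
    have "Mv d (wvec ?e n) i = Mv d g i" by (rule Mv_cong) (simp add: w)
    then show "block d n ! i = x ! i" using i by (simp add: block_nth g_def Mv_inv)
  qed
  have "odd n = wvec ?e n (?e - 1)" by (simp add: wvec_def)
  also have "\<dots> = g (?e - 1)" by (rule w) simp
  also have "\<dots> = x ! (?e - 1)" unfolding g_def by (rule Mv_last)
  finally have "even n" using assms(2) by simp
  then show ?thesis using n(1) b by blast
qed

lemma drop_concat_eq: "(\<forall>y \<in> set xs. length y = e) \<Longrightarrow> drop (n * e) (concat xs) = concat (drop n xs)"
proof (induction xs arbitrary: n)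
  case Nil then show ?case by simp
next
  case (Cons y ys)
  then show ?case by (cases n) auto
qed

lemma lam_window:
  assumes "n + 1 < 2 ^ 2 ^ d" "z \<le> 2 ^ d" "d \<le> z"
  shows "take (d + 2 ^ d) (drop (n * 2 ^ d + (2 ^ d - z)) (lam d)) =
         drop (2 ^ d - z) (block d n) @ take (d + 2 ^ d - z) (block d (n + 1))"
proof -
  let ?e = "2 ^ d :: nat"
  let ?R = "concat (map (block d) [Suc (Suc n)..<2 ^ ?e])"
  have "drop (n * ?e) (lam d) = concat (drop n (map (block d) [0..<2 ^ ?e]))"
    unfolding lam_def by (rule drop_concat_eq) (auto simp: block_len)
  also have "drop n (map (block d) [0..<2 ^ ?e]) = map (block d) [n..<2 ^ ?e]"
    by (simp add: drop_map)
  also have "[n..<2 ^ ?e] = n # [Suc n..<2 ^ ?e]"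
    using assms(1) by (subst upt_conv_Cons) simp_all
  also have "[Suc n..<2 ^ ?e] = Suc n # [Suc (Suc n)..<2 ^ ?e]"
    using assms(1) by (subst upt_conv_Cons) simp_all
  finally have D: "drop (n * ?e) (lam d) = block d n @ block d (Suc n) @ ?R"
    by simp
  have "drop (n * ?e + (?e - z)) (lam d) = drop (?e - z) (drop (n * ?e) (lam d))"
    by (simp add: add.commute)
  also have "\<dots> = drop (?e - z) (block d n) @ block d (Suc n) @ ?R"
    unfolding D by (simp add: block_len)
  finally have E: "drop (n * ?e + (?e - z)) (lam d) = drop (?e - z) (block d n) @ block d (Suc n) @ ?R" .
  have L: "length (drop (?e - z) (block d n)) = z" using assms by (simp add: block_len)
  have "take (d + ?e) (drop (?e - z) (block d n) @ block d (Suc n) @ ?R) =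
        drop (?e - z) (block d n) @ take (d + ?e - z) (block d (Suc n) @ ?R)"
    using L assms by (simp add: take_append)
  also have "take (d + ?e - z) (block d (Suc n) @ ?R) = take (d + ?e - z) (block d (Suc n))"
    using assms by (simp add: take_append block_len)
  finally show ?thesis using E by simp
qed

lemma evlem: "even (N::nat) \<Longrightarrow> even n \<Longrightarrow> n < N \<Longrightarrow> n + 1 < N"
  by presburger

lemma evlem2: "even (N::nat) \<Longrightarrow> N \<ge> 2 \<Longrightarrow> (even n \<and> n \<le> N - 2) = (even n \<and> n < N)"
  by presburger

definition Xw :: "nat \<Rightarrow> bool list \<Rightarrow> nat \<Rightarrow> bool list" where
  "Xw d a z = map (\<lambda>p. if p < 2 ^ d - z then \<not> a ! (z + p) else a ! (p - (2 ^ d - z))) [0..<2 ^ d]"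

lemma window_iff:
  fixes x a :: "bool list"
  assumes len: "length x = e" "length a = d + e"
    and compl: "\<forall>i < d. a ! (e + i) = (\<not> a ! i)"
    and z: "d \<le> z" "z \<le> e"
  shows "(drop (e - z) x @ take (d + e - z) (map Not x) = a) \<longleftrightarrow>
         x = map (\<lambda>p. if p < e - z then \<not> a ! (z + p) else a ! (p - (e - z))) [0..<e]"
proof
  assume W: "drop (e - z) x @ take (d + e - z) (map Not x) = a"
  show "x = map (\<lambda>p. if p < e - z then \<not> a ! (z + p) else a ! (p - (e - z))) [0..<e]"
  proof (rule nth_equalityI)
    show "length x = length (map (\<lambda>p. if p < e - z then \<not> a ! (z + p) else a ! (p - (e - z))) [0..<e])"
      using len by simp
    fix p assume "p < length x"
    then have p: "p < e" using len by simp
    show "x ! p = map (\<lambda>p. if p < e - z then \<not> a ! (z + p) else a ! (p - (e - z))) [0..<e] ! p"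
    proof (cases "p < e - z")
      case True
      have "a ! (z + p) = (drop (e - z) x @ take (d + e - z) (map Not x)) ! (z + p)" using W by simp
      also have "\<dots> = (\<not> x ! p)" using True p len z by (simp add: nth_append)
      finally show ?thesis using True p by simp
    next
      case False
      have A1: "a ! (p - (e - z)) = (drop (e - z) x @ take (d + e - z) (map Not x)) ! (p - (e - z))" using W by simp
      have i1: "p - (e - z) < z" "e - z + (p - (e - z)) = p" using False p z by auto
      have "(drop (e - z) x @ take (d + e - z) (map Not x)) ! (p - (e - z)) = drop (e - z) x ! (p - (e - z))"
        using i1 len z by (simp add: nth_append)
      also have "\<dots> = x ! p" using i1 len z by simp
      finally show ?thesis using A1 False p by simp
    qed
  qed
next
  assume X: "x = map (\<lambda>p. if p < e - z then \<not> a ! (z + p) else a ! (p - (e - z))) [0..<e]"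
  show "drop (e - z) x @ take (d + e - z) (map Not x) = a"
  proof (rule nth_equalityI)
    show "length (drop (e - z) x @ take (d + e - z) (map Not x)) = length a"
      using len z by simp
    fix q assume "q < length (drop (e - z) x @ take (d + e - z) (map Not x))"
    then have q: "q < d + e" using len z by simp
    show "(drop (e - z) x @ take (d + e - z) (map Not x)) ! q = a ! q"
    proof (cases "q < z")
      case True
      have i1: "\<not> (e - z + q < e - z)" "e - z + q < e" "e - z + q - (e - z) = q" using True z by auto
      have "(drop (e - z) x @ take (d + e - z) (map Not x)) ! q = drop (e - z) x ! q"
        using True len z by (simp add: nth_append)
      also have "\<dots> = x ! (e - z + q)" using True len z by simp
      also have "\<dots> = a ! q" using X i1 by simp
      finally show ?thesis .
    next
      case False
      have e1: "(drop (e - z) x @ take (d + e - z) (map Not x)) ! q = (\<not> x ! (q - z))"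
        using False q len z by (simp add: nth_append)
      show ?thesis
      proof (cases "q - z < e - z")
        case True
        then show ?thesis using e1 X False q z by simp
      next
        case F2: False
        have "q - e < d" "e + (q - e) = q" using q F2 z False by auto
        then have "a ! q = (\<not> a ! (q - e))" using compl by metis
        moreover have "q - z - (e - z) = q - e" using F2 z False by auto
        ultimately show ?thesis using e1 X F2 False q z by simp
      qed
    qed
  qed
qed

lemma key:
  assumes d: "d \<ge> 1" and len: "length a = d + 2 ^ d"
    and compl: "\<forall>i < d. a ! (2 ^ d + i) = (\<not> a ! i)"
    and n: "even n" "n < 2 ^ 2 ^ d" and z: "d \<le> z" "z \<le> 2 ^ d"
  shows "take (d + 2 ^ d) (drop (n * 2 ^ d + (2 ^ d - z)) (lam d)) = a \<longleftrightarrow>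
         (block d n = Xw d a z \<and> \<not> a ! (z - 1))"
proof -
  let ?e = "2 ^ d :: nat"
  have ev: "even (2 ^ ?e :: nat)" using d by simp
  have n1: "n + 1 < 2 ^ ?e" using n ev evlem by blast
  have W: "take (d + ?e) (drop (n * ?e + (?e - z)) (lam d)) =
        drop (?e - z) (block d n) @ take (d + ?e - z) (map Not (block d n))"
    using lam_window[OF n1 z(2) z(1)] block_Suc[OF n(1)] by simp
  have last: "\<not> block d n ! (?e - 1)"
  proof -
    have "block d n ! (?e - 1) = Mv d (wvec ?e n) (?e - 1)" by (rule block_nth) simp
    also have "\<dots> = wvec ?e n (?e - 1)" by (rule Mv_last)
    also have "\<dots> = odd n" by (simp add: wvec_def)
    finally show ?thesis using n(1) by simp
  qed
  have I: "(drop (?e - z) (block d n) @ take (d + ?e - z) (map Not (block d n)) = a) \<longleftrightarrow>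
        block d n = Xw d a z"
    unfolding Xw_def by (rule window_iff) (use block_len len compl z in auto)
  have A: "block d n = Xw d a z \<Longrightarrow> \<not> a ! (z - 1)"
  proof -
    assume B: "block d n = Xw d a z"
    have "\<not> (?e - 1 < ?e - z)" "?e - 1 - (?e - z) = z - 1" "?e - 1 < ?e" using z d by auto
    then have "Xw d a z ! (?e - 1) = a ! (z - 1)"
      by (simp add: Xw_def)
    then show ?thesis using B last by simp
  qed
  show ?thesis using W I A by auto
qed

theorem mainTheorem7:
  fixes d :: nat and a :: "bool list"
  assumes "d \<ge> 1"
    and "length a = d + 2 ^ d"
    and "\<forall>i < d. a ! (2 ^ d + i) = (\<not> a ! i)"
  shows "card {(n, z). even n \<and> n \<le> 2 ^ (2 ^ d) - 2 \<and> d \<le> z \<and> z \<le> 2 ^ d \<and>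
                take (d + 2 ^ d) (drop (n * 2 ^ d + (2 ^ d - z)) (lam d)) = a}
       = card {z. d \<le> z \<and> z \<le> 2 ^ d \<and> \<not> a ! (z - 1)}"
proof -
  let ?e = "2 ^ d :: nat"
  let ?S = "{(n, z). even n \<and> n \<le> 2 ^ (2 ^ d) - 2 \<and> d \<le> z \<and> z \<le> 2 ^ d \<and>
                take (d + 2 ^ d) (drop (n * 2 ^ d + (2 ^ d - z)) (lam d)) = a}"
  let ?R = "{z. d \<le> z \<and> z \<le> 2 ^ d \<and> \<not> a ! (z - 1)}"
  have ev: "even (2 ^ ?e :: nat)" using assms(1) by simp
  have pos: "(2::nat) ^ ?e \<ge> 2" using assms(1)
  proof -
    have "?e \<ge> 1" by simp
    then have "(2::nat) ^ 1 \<le> 2 ^ ?e" by (rule power_increasing) simp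
    then show ?thesis by simp
  qed
  have nle: "(even n \<and> n \<le> 2 ^ ?e - 2) \<longleftrightarrow> (even n \<and> n < 2 ^ ?e)" for n :: nat
    using ev pos evlem2 by blast
  have mem: "(n, z) \<in> ?S \<longleftrightarrow> (even n \<and> n < 2 ^ ?e \<and> d \<le> z \<and> z \<le> ?e \<and> block d n = Xw d a z \<and> \<not> a ! (z - 1))" for n z
    using key[OF assms, of n z] nle[of n] by auto
  have "bij_betw snd ?S ?R"
  proof (rule bij_betw_imageI)
    show "inj_on snd ?S"
    proof (rule inj_onI)
      fix p q assume p: "p \<in> ?S" and q: "q \<in> ?S" and eq: "snd p = snd q"
      obtain n z where pz: "p = (n, z)" by (cases p)
      obtain m z' where qz: "q = (m, z')" by (cases q)
      have "z' = z" using eq pz qz by simp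
      have P1: "(n, z) \<in> ?S" using p by (simp only: pz)
      have Q1: "(m, z) \<in> ?S" using q by (simp only: qz \<open>z' = z\<close>)
      have P2: "block d n = Xw d a z" "n < 2 ^ ?e" using mem[of n z] P1 by blast+
      have Q2: "block d m = Xw d a z" "m < 2 ^ ?e" using mem[of m z] Q1 by blast+
      have "block d n = block d m" "n < 2 ^ ?e" "m < 2 ^ ?e" using P2 Q2 by simp_all
      then have "n = m" using block_inj by blast
      then show "p = q" using pz qz \<open>z' = z\<close> by simp
    qed
    show "snd ` ?S = ?R"
    proof
      show "snd ` ?S \<subseteq> ?R"
      proof
        fix z assume "z \<in> snd ` ?S"
        then obtain n where "(n, z) \<in> ?S" by force
        then show "z \<in> ?R" using mem[of n z] by blast
      qed
      show "?R \<subseteq> snd ` ?S"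
      proof
        fix z assume zR: "z \<in> ?R"
        have lenX: "length (Xw d a z) = ?e" by (simp add: Xw_def)
        have "\<not> (?e - 1 < ?e - z)" "?e - 1 - (?e - z) = z - 1" "?e - 1 < ?e" using zR assms(1) by auto
        then have "Xw d a z ! (?e - 1) = a ! (z - 1)" by (simp add: Xw_def)
        then obtain n where n: "n < 2 ^ ?e" "even n" "block d n = Xw d a z"
          using block_surj[OF lenX] zR by auto
        then have "(n, z) \<in> ?S" using mem[of n z] zR by blast
        then show "z \<in> snd ` ?S" by force
      qed
    qed
  qed
  then show ?thesis by (rule bij_betw_same_card)
qed

end
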